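(* Let $N\in\mathbb{N}_{\ge2}$ and $\phi,B_x,B_y>0$. For any data pairs $\{(x_i,y_i)\}_{i\in[N]}\subset[-B_x,B_x]\times[-B_y,B_y]$ with $|x_i-x_j|\ge\phi$ for all $i\ne j$, there exists a ReLU FNN function $f^{(mmr)}_{FF}:\mathbb{R}\to\mathbb{R}$ with width $N-1$, depth $2$ and weight bound $\max\{1,B_x,B_y,4B_y/\phi\}$ such that $f^{(mmr)}_{FF}(x_i)=y_i$ for all $i\in[N]$. Furthermore, $|f^{(mmr)}_{FF}(x)|\le\frac{8(N-1)B_xB_y}{\phi}+B_y$ for all $x\in[-B_x,B_x]$.
   Context: ReLU FNN of depth $L$, width $W$: $f_0=x$, $f_l=\sigma_R(W_lf_{l-1}+b_l)$ ($1\le l\le L-1$), $f=W_Lf_{L-1}+b_L$ with hidden layers of width $W$, $\sigma_R(x)=\max\{x,0\}$; the weight bound is the maximum absolute value of all weights and biases. *)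

theory Defs
  imports "HOL-Analysis.Analysis"
begin

definition relu :: "real \<Rightarrow> real" where
  "relu x = max x 0"

text \<open>A scalar-input, scalar-output ReLU feed-forward network of depth L and width W
  is given by weights Wt l i j (layer l, output neuron i, input neuron j) and biases bs l i.\<close>

definition layer_in :: "nat \<Rightarrow> nat \<Rightarrow> nat" where
  "layer_in W l = (if l \<le> 1 then 1 else W)"

definition layer_out :: "nat \<Rightarrow> nat \<Rightarrow> nat \<Rightarrow> nat" where
  "layer_out L W l = (if l < L then W else 1)"

fun hidden :: "(nat \<Rightarrow> nat \<Rightarrow> nat \<Rightarrow> real) \<Rightarrow> (nat \<Rightarrow> nat \<Rightarrow> real) \<Rightarrow> nat
                \<Rightarrow> real \<Rightarrow> nat \<Rightarrow> nat \<Rightarrow> real" where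
  "hidden Wt bs W x 0 = (\<lambda>i. if i = 0 then x else 0)"
| "hidden Wt bs W x (Suc l) =
     (\<lambda>i. relu ((\<Sum>j<layer_in W (Suc l). Wt (Suc l) i j * hidden Wt bs W x l j) + bs (Suc l) i))"

definition fnn_eval :: "nat \<Rightarrow> nat \<Rightarrow> (nat \<Rightarrow> nat \<Rightarrow> nat \<Rightarrow> real) \<Rightarrow> (nat \<Rightarrow> nat \<Rightarrow> real)
                        \<Rightarrow> real \<Rightarrow> real" where
  "fnn_eval L W Wt bs x =
     (\<Sum>j<layer_in W L. Wt L 0 j * hidden Wt bs W x (L - 1) j) + bs L 0"

definition weights_bounded_by ::
  "nat \<Rightarrow> nat \<Rightarrow> (nat \<Rightarrow> nat \<Rightarrow> nat \<Rightarrow> real) \<Rightarrow> (nat \<Rightarrow> nat \<Rightarrow> real) \<Rightarrow> real \<Rightarrow> bool" where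
  "weights_bounded_by L W Wt bs M \<longleftrightarrow>
     (\<forall>l\<in>{1..L}. \<forall>i<layer_out L W l.
        \<bar>bs l i\<bar> \<le> M \<and> (\<forall>j<layer_in W l. \<bar>Wt l i j\<bar> \<le> M))"

definition is_relu_fnn :: "nat \<Rightarrow> nat \<Rightarrow> real \<Rightarrow> (real \<Rightarrow> real) \<Rightarrow> bool" where
  "is_relu_fnn L W M f \<longleftrightarrow>
     (\<exists>Wt bs. weights_bounded_by L W Wt bs M \<and> (\<forall>x. f x = fnn_eval L W Wt bs x))"

end

theory Submission
  imports Defs
begin

lemma interp_aux:
  fixes \<phi> Bx By :: real and x y :: "nat \<Rightarrow> real"
  assumes ph: "\<phi> > 0" and bY: "By > 0"
    and yb: "\<And>i. i \<in> I \<Longrightarrow> \<bar>y i\<bar> \<le> By"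
    and sep: "\<And>i j. i \<in> I \<Longrightarrow> j \<in> I \<Longrightarrow> i \<noteq> j \<Longrightarrow> \<bar>x i - x j\<bar> \<ge> \<phi>"
    and fin: "finite I" and cI: "card I = Suc n"
  shows "\<exists>c a p. \<bar>c\<bar> \<le> By \<and> (\<forall>k<n. \<bar>a k\<bar> \<le> 4 * By / \<phi> \<and> p k \<in> x ` I
           \<and> p k \<le> Max (x ` I))
         \<and> (\<forall>i\<in>I. c + (\<Sum>k<n. a k * relu (x i - p k)) = y i)
         \<and> \<bar>\<Sum>k<n. a k\<bar> \<le> 2 * By / \<phi>"
  using yb sep fin cI
proof (induction n arbitrary: I)
  case 0
  then obtain i where I: "I = {i}" by (auto simp: card_Suc_eq)
  show ?case
    apply (rule exI[of _ "y i"], rule exI[of _ "\<lambda>_. 0"], rule exI[of _ "\<lambda>_. 0"])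
    using 0 I bY ph by auto
next
  case (Suc n)
  have ne: "I \<noteq> {}" using Suc.prems(4) by auto
  have "Max (x ` I) \<in> x ` I" using ne Suc.prems(3) by simp
  then obtain i where iI: "i \<in> I" and xi: "x i = Max (x ` I)" by auto
  define J where "J = I - {i}"
  have cJ: "card J = Suc n" using Suc.prems(4) iI Suc.prems(3) unfolding J_def by simp
  have finJ: "finite J" using Suc.prems(3) J_def by simp
  have JI: "J \<subseteq> I" using J_def by auto
  obtain c a p where
    c: "\<bar>c\<bar> \<le> By" and
    ap: "\<forall>k<n. \<bar>a k\<bar> \<le> 4 * By / \<phi> \<and> p k \<in> x ` J \<and> p k \<le> Max (x ` J)" and
    interp: "\<forall>i\<in>J. c + (\<Sum>k<n. a k * relu (x i - p k)) = y i" and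
    sl: "\<bar>\<Sum>k<n. a k\<bar> \<le> 2 * By / \<phi>"
    using Suc.IH[of J] Suc.prems JI cJ finJ by blast
  have neJ: "J \<noteq> {}" using cJ by auto
  have "Max (x ` J) \<in> x ` J" using neJ finJ by simp
  then obtain j where jJ: "j \<in> J" and xj: "x j = Max (x ` J)" by auto
  have jI: "j \<in> I" and jne: "j \<noteq> i" using jJ J_def by auto
  have "x j \<le> x i" using xi jI Suc.prems(3) by simp
  moreover have "\<bar>x i - x j\<bar> \<ge> \<phi>" using Suc.prems(2)[OF iI jI] jne by auto
  ultimately have dij: "x i - x j \<ge> \<phi>" by auto
  have dpos: "x i - x j > 0" using dij ph by auto
  define s where "s = (\<Sum>k<n. a k)"
  define sn where "sn = (y i - y j) / (x i - x j)"
  have yy: "\<bar>y i - y j\<bar> \<le> 2 * By" using Suc.prems(1)[OF iI] Suc.prems(1)[OF jI] by auto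
  have "\<bar>sn\<bar> = \<bar>y i - y j\<bar> / (x i - x j)" unfolding sn_def using dpos by (simp add: abs_divide)
  also have "\<dots> \<le> 2 * By / (x i - x j)" using yy dpos by (intro divide_right_mono) auto
  also have "\<dots> \<le> 2 * By / \<phi>" using dij ph bY
    by (intro divide_left_mono) auto
  finally have snb: "\<bar>sn\<bar> \<le> 2 * By / \<phi>" .
  have h4: "4 * By / \<phi> = 2 * By / \<phi> + 2 * By / \<phi>" by (simp add: field_simps)
  have newb: "\<bar>sn - s\<bar> \<le> 4 * By / \<phi>" using snb sl unfolding h4 s_def by arith
  define a' where "a' = a(n := sn - s)"
  define p' where "p' = p(n := x j)"
  have sumeq: "\<And>t. (\<Sum>k<Suc n. a' k * relu (t - p' k)) =
      (\<Sum>k<n. a k * relu (t - p k)) + (sn - s) * relu (t - x j)"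
    unfolding a'_def p'_def by (simp add: sum.lessThan_Suc)
  have xJle: "\<And>k. k \<in> J \<Longrightarrow> x k \<le> x j" using xj finJ by simp
  have MJle: "Max (x ` J) \<le> Max (x ` I)" using xj xi \<open>x j \<le> x i\<close> by simp
  have lin: "(\<Sum>k<n. a k * relu (x i - p k)) = (\<Sum>k<n. a k * relu (x j - p k)) + s * (x i - x j)"
  proof -
    have "(\<Sum>k<n. a k * relu (x i - p k)) = (\<Sum>k<n. a k * (x j - p k) + a k * (x i - x j))"
      using ap xj \<open>x j \<le> x i\<close> by (intro sum.cong) (auto simp: relu_def algebra_simps)
    also have "\<dots> = (\<Sum>k<n. a k * relu (x j - p k)) + s * (x i - x j)"
      unfolding s_def sum.distrib sum_distrib_right using ap xj
      by (auto simp: relu_def intro!: sum.cong)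
    finally show ?thesis .
  qed
  show ?case
  proof (intro exI conjI)
    show "\<bar>c\<bar> \<le> By" by fact
    show "\<forall>k<Suc n. \<bar>a' k\<bar> \<le> 4 * By / \<phi> \<and> p' k \<in> x ` I \<and> p' k \<le> Max (x ` I)"
      using ap newb JI jI MJle \<open>x j \<le> x i\<close> xi unfolding a'_def p'_def xj[symmetric]
      by (auto simp: less_Suc_eq)
    show "\<forall>k\<in>I. c + (\<Sum>k'<Suc n. a' k' * relu (x k - p' k')) = y k"
    proof
      fix k assume kI: "k \<in> I"
      show "c + (\<Sum>k'<Suc n. a' k' * relu (x k - p' k')) = y k"
      proof (cases "k = i")
        case True
        have hj: "c + (\<Sum>k<n. a k * relu (x j - p k)) = y j" using interp jJ by auto
        have r: "relu (x i - x j) = x i - x j" using dpos by (simp add: relu_def)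
        have q: "sn * (x i - x j) = y i - y j" unfolding sn_def using dpos by simp
        have "c + (\<Sum>k'<Suc n. a' k' * relu (x k - p' k')) =
            (c + (\<Sum>k<n. a k * relu (x j - p k))) + sn * (x i - x j)"
          unfolding sumeq True lin r by (simp add: algebra_simps)
        then show ?thesis unfolding hj q True by simp
      next
        case False
        hence "k \<in> J" using kI J_def by auto
        then show ?thesis unfolding sumeq using interp xJle[of k] by (simp add: relu_def)
      qed
    qed
    show "\<bar>\<Sum>k<Suc n. a' k\<bar> \<le> 2 * By / \<phi>"
      using snb unfolding a'_def s_def by (simp add: sum.lessThan_Suc)
  qed
qed

theorem lemma15:
  fixes N :: nat and \<phi> Bx By :: real and x y :: "nat \<Rightarrow> real"
  assumes "N \<ge> 2" and "\<phi> > 0" and "Bx > 0" and "By > 0"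
    and "\<And>i. i < N \<Longrightarrow> x i \<in> {-Bx..Bx} \<and> y i \<in> {-By..By}"
    and "\<And>i j. i < N \<Longrightarrow> j < N \<Longrightarrow> i \<noteq> j \<Longrightarrow> \<bar>x i - x j\<bar> \<ge> \<phi>"
  shows "\<exists>f. is_relu_fnn 2 (N - 1) (Max {1, Bx, By, 4 * By / \<phi>}) f
           \<and> (\<forall>i<N. f (x i) = y i)
           \<and> (\<forall>t\<in>{-Bx..Bx}. \<bar>f t\<bar> \<le> 8 * real (N - 1) * Bx * By / \<phi> + By)"
proof -
  define n where "n = N - 1"
  have cN: "card {..<N} = Suc n" using assms(1) n_def by simp
  obtain c a p where
    c: "\<bar>c\<bar> \<le> By" and
    ap: "\<forall>k<n. \<bar>a k\<bar> \<le> 4 * By / \<phi> \<and> p k \<in> x ` {..<N} \<and> p k \<le> Max (x ` {..<N})" and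
    interp: "\<forall>i\<in>{..<N}. c + (\<Sum>k<n. a k * relu (x i - p k)) = y i"
  proof -
    have "\<And>i. i \<in> {..<N} \<Longrightarrow> \<bar>y i\<bar> \<le> By" using assms(5) by fastforce
    moreover have "\<And>i j. i \<in> {..<N} \<Longrightarrow> j \<in> {..<N} \<Longrightarrow> i \<noteq> j \<Longrightarrow> \<bar>x i - x j\<bar> \<ge> \<phi>"
      using assms(6) by auto
    ultimately show ?thesis using interp_aux[of \<phi> By "{..<N}" y x n] assms(2,4) cN that by blast
  qed
  have pb: "\<And>k. k < n \<Longrightarrow> \<bar>p k\<bar> \<le> Bx" using ap assms(5) by fastforce
  define f where "f = (\<lambda>t. c + (\<Sum>k<n. a k * relu (t - p k)))"
  define M where "M = Max {1, Bx, By, 4 * By / \<phi>}"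
  have M: "1 \<le> M" "Bx \<le> M" "By \<le> M" "4 * By / \<phi> \<le> M" unfolding M_def by auto
  have pM: "\<And>k. k < n \<Longrightarrow> \<bar>p k\<bar> \<le> M" using pb M by force
  have aM: "\<And>k. k < n \<Longrightarrow> \<bar>a k\<bar> \<le> M" using ap M by force
  define Wt where "Wt = (\<lambda>l (i::nat) (j::nat). if l = (1::nat) then (1::real) else a j)"
  define bs where "bs = (\<lambda>l (i::nat). if l = (1::nat) then - p i else c)"
  have ev: "fnn_eval 2 n Wt bs t = f t" for t
    unfolding fnn_eval_def f_def Wt_def bs_def
    by (simp add: layer_in_def numeral_2_eq_2 add.commute)
  have wb: "weights_bounded_by 2 n Wt bs M"
    unfolding weights_bounded_by_def layer_out_def layer_in_def Wt_def bs_def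
    using M c ap pM aM by (auto simp: numeral_2_eq_2 le_Suc_eq)
  show ?thesis
  proof (intro exI conjI)
    show "is_relu_fnn 2 (N - 1) (Max {1, Bx, By, 4 * By / \<phi>}) f"
      unfolding is_relu_fnn_def using wb ev unfolding n_def M_def by metis
    show "\<forall>i<N. f (x i) = y i" using interp f_def by auto
    show "\<forall>t\<in>{-Bx..Bx}. \<bar>f t\<bar> \<le> 8 * real (N - 1) * Bx * By / \<phi> + By"
    proof
      fix t assume t: "t \<in> {-Bx..Bx}"
      have A: "\<bar>f t\<bar> \<le> \<bar>c\<bar> + (\<Sum>k<n. \<bar>a k * relu (t - p k)\<bar>)"
        unfolding f_def by (rule order_trans[OF abs_triangle_ineq add_left_mono[OF sum_abs]])
      have B: "(\<Sum>k<n. \<bar>a k * relu (t - p k)\<bar>) \<le> (\<Sum>k<n. 4 * By / \<phi> * (2 * Bx))"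
      proof (rule sum_mono)
        fix k assume "k \<in> {..<n}"
        hence k: "\<bar>a k\<bar> \<le> 4 * By / \<phi>" "\<bar>p k\<bar> \<le> Bx" using ap pb by auto
        have "\<bar>relu (t - p k)\<bar> \<le> 2 * Bx" using k t by (auto simp: relu_def)
        then show "\<bar>a k * relu (t - p k)\<bar> \<le> 4 * By / \<phi> * (2 * Bx)"
          unfolding abs_mult using k assms(2,4) by (intro mult_mono) auto
      qed
      have "\<bar>f t\<bar> \<le> \<bar>c\<bar> + (\<Sum>k<n. 4 * By / \<phi> * (2 * Bx))" using A B by linarith
      also have "\<bar>c\<bar> + (\<Sum>k<n. 4 * By / \<phi> * (2 * Bx)) \<le> 8 * real (N - 1) * Bx * By / \<phi> + By"
      proof -
        have e: "(\<Sum>k<n. 4 * By / \<phi> * (2 * Bx)) = 8 * real (N - 1) * Bx * By / \<phi>"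
          unfolding sum_constant card_lessThan n_def using assms(1) by (simp add: of_nat_diff)
        show "\<bar>c\<bar> + (\<Sum>k<n. 4 * By / \<phi> * (2 * Bx)) \<le> 8 * real (N - 1) * Bx * By / \<phi> + By"
          unfolding e using c by linarith
      qed
      finally show "\<bar>f t\<bar> \<le> 8 * real (N - 1) * Bx * By / \<phi> + By" by simp
    qed
  qed
qed

end
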